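(* Consider an SIR epidemic on a graph $G$ with intrinsic infection rate $\beta$ and a given external infection policy with virulence $\mu$, and an SIS epidemic on the same graph with the same intrinsic infection rate, the same initial infected set, and the identical external infection policy (i.e., the same external rate vector $L(t)$ for all $t$). Then $$T_{SIS}\ge_{st}T_{SIR},$$ i.e., $\mathbb{P}[T_{SIS}>r]\ge\mathbb{P}[T_{SIR}>r]$ for all $r$.
   Context: SIS: each node is susceptible $(0)$ or infected $(1)$; a susceptible node $j$ becomes infected at rate $\beta\cdot(\text{number of infected neighbors})+L_j(t)$ and an infected node becomes susceptible at rate $1$. SIR: each node is susceptible $(0)$, infected $(1)$ or resistant $(e)$; a susceptible node $j$ becomes infected at rate $\beta\cdot(\text{number of infected neighbors})+L_j(t)$, an infected node becomes resistant at rate $1$, and resistant is absorbing. The external vector $L(t)$ has $L_j(t)\ge 0$, $\|L(t)\|_1\le\mu$. $T_{SIS}$ (resp. $T_{SIR}$) is the first time no node is infected. *)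

theory Defs
  imports "HOL-Analysis.Analysis"
begin

datatype sir = S_sus | I_inf | R_res

instance sir :: finite
proof
  have "(UNIV :: sir set) = {S_sus, I_inf, R_res}" by (auto intro: sir.exhaust)
  then show "finite (UNIV :: sir set)" by (metis finite.emptyI finite.insertI)
qed

text \<open>A state is the set of infected nodes. The chain is
  stopped (made absorbing) once no node is infected, so that the mass on states
  with some infected node at time r equals P[T_SIS > r].\<close>
definition sis_rate ::
  "('v::finite \<Rightarrow> 'v \<Rightarrow> bool) \<Rightarrow> real \<Rightarrow> (real \<Rightarrow> 'v \<Rightarrow> real) \<Rightarrow> real \<Rightarrow> 'v set \<Rightarrow> 'v set \<Rightarrow> real"
  where
  "sis_rate E \<beta> L t x y =
     (if x = {} then 0 else
       (\<Sum>j\<in>- x. if y = insert j x then \<beta> * real (card {i\<in>x. E i j}) + L t j else 0)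
     + (\<Sum>j\<in>x. if y = x - {j} then 1 else 0))"

definition sir_rate ::
  "('v::finite \<Rightarrow> 'v \<Rightarrow> bool) \<Rightarrow> real \<Rightarrow> (real \<Rightarrow> 'v \<Rightarrow> real) \<Rightarrow> real \<Rightarrow> ('v \<Rightarrow> sir) \<Rightarrow> ('v \<Rightarrow> sir) \<Rightarrow> real"
  where
  "sir_rate E \<beta> L t x y =
     (if (\<forall>v. x v \<noteq> I_inf) then 0 else
       (\<Sum>j\<in>{j. x j = S_sus}. if y = x(j := I_inf) then \<beta> * real (card {i. E i j \<and> x i = I_inf}) + L t j else 0)
     + (\<Sum>j\<in>{j. x j = I_inf}. if y = x(j := R_res) then 1 else 0))"

text \<open>p is the law (transient distribution) of the time-inhomogeneous Markov chain
  with rates q started at x0: continuous in t and solving the Kolmogorov forward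
  (master) equation in integral form.\<close>
definition forward_law ::
  "(real \<Rightarrow> 's::finite \<Rightarrow> 's \<Rightarrow> real) \<Rightarrow> 's \<Rightarrow> (real \<Rightarrow> 's \<Rightarrow> real) \<Rightarrow> bool" where
  "forward_law q x0 p \<longleftrightarrow>
     (\<forall>y. continuous_on {0..} (\<lambda>t. p t y)) \<and>
     (\<forall>t\<ge>0. \<forall>y. p t y = (if y = x0 then 1 else 0)
        + (LINT s:{0..t}|lborel. (\<Sum>x\<in>UNIV. p s x * q s x y) - p s y * (\<Sum>z\<in>UNIV. q s y z)))"

text \<open>P[T > r] where T is the first time no node is infected.\<close>
definition sis_surv :: "(real \<Rightarrow> 'v::finite set \<Rightarrow> real) \<Rightarrow> real \<Rightarrow> real" where
  "sis_surv p r = (if r < 0 then 1 else (\<Sum>y\<in>{y. y \<noteq> {}}. p r y))"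

definition sir_surv :: "(real \<Rightarrow> ('v::finite \<Rightarrow> sir) \<Rightarrow> real) \<Rightarrow> real \<Rightarrow> real" where
  "sir_surv p r = (if r < 0 then 1 else (\<Sum>y\<in>{y. \<exists>v. y v = I_inf}. p r y))"

end

theory Submission
  imports Defs
begin

lemma SI:
  fixes f :: "real \<Rightarrow> real"
  assumes f: "f \<in> borel_measurable borel" and b: "\<And>s. s \<in> {a..b} \<Longrightarrow> \<bar>f s\<bar> \<le> B"
  shows "set_integrable lborel {a..b} f"
  unfolding set_integrable_def
  by (rule integrableI_bounded_set_indicator[where B=B]) (use f b in \<open>auto simp: emeasure_lborel_Icc_eq\<close>)

lemma cbound:
  fixes f :: "real \<Rightarrow> real"
  assumes "continuous_on UNIV f"
  shows "\<exists>B. \<forall>s\<in>{a..b}. \<bar>f s\<bar> \<le> B"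
proof -
  have "compact (f ` {a..b})"
    by (rule compact_continuous_image) (use assms continuous_on_subset in auto)
  then have "bounded (f ` {a..b})" by (rule compact_imp_bounded)
  then obtain B where "\<forall>x\<in>f ` {a..b}. norm x \<le> B" by (auto simp: bounded_iff)
  then show ?thesis by auto
qed

lemma int_pow:
  fixes t :: real assumes "0 \<le> t"
  shows "(LINT s:{0..t}|lborel. s ^ n) = t ^ Suc n / Suc n"
proof -
  have "(LINT s:{0..t}|lborel. s ^ n) = (\<integral>x. x^n * indicator {0..t} x \<partial>lborel)"
    unfolding set_lebesgue_integral_def by (simp add: mult.commute)
  also have "\<dots> = t ^ Suc n / Suc n" using integral_power[of 0 t n] assms by simp
  finally show ?thesis .
qed

lemma pow_step:
  fixes f :: "real \<Rightarrow> real" and C M t :: real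
  assumes t: "0 \<le> t" and C: "0 \<le> C" and fi: "set_integrable lborel {0..t} f"
    and le: "\<And>s. s \<in> {0..t} \<Longrightarrow> f s \<le> M * (C * s) ^ n / fact n"
  shows "C * (LINT s:{0..t}|lborel. f s) \<le> M * (C * t) ^ Suc n / fact (Suc n)"
proof -
  have pi: "set_integrable lborel {0..t} (\<lambda>s. M * (C * s) ^ n / fact n)"
    by (rule SI[where B="\<bar>M\<bar> * (C*t)^n / fact n"]) 
       (use C in \<open>auto simp: abs_mult power_abs intro!: divide_right_mono mult_left_mono power_mono mult_left_mono\<close>)
  have "(LINT s:{0..t}|lborel. f s) \<le> (LINT s:{0..t}|lborel. M * (C * s) ^ n / fact n)"
    by (rule set_integral_mono[OF fi pi le])
  also have "\<dots> = (M * C ^ n / fact n) * (LINT s:{0..t}|lborel. s ^ n)"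
    by (subst set_integral_mult_right[symmetric]) (simp add: power_mult_distrib field_simps)
  also have "\<dots> = (M * C ^ n / fact n) * (t ^ Suc n / Suc n)"
    using int_pow[OF t] by simp
  finally have "C * (LINT s:{0..t}|lborel. f s) \<le> C * ((M * C ^ n / fact n) * (t ^ Suc n / Suc n))"
    using C mult_left_mono by blast
  also have "\<dots> = M * (C * t) ^ Suc n / fact (Suc n)"
    by (simp add: power_mult_distrib field_simps)
  finally show ?thesis .
qed

lemma exp_term_lim: "(\<lambda>n. M * (x ^ n / fact n)) \<longlonglongrightarrow> (0::real)"
proof -
  have "(\<lambda>n. x ^ n /\<^sub>R fact n) \<longlonglongrightarrow> 0"
    by (rule summable_LIMSEQ_zero[OF summable_exp_generic])
  then have "(\<lambda>n. x ^ n / fact n) \<longlonglongrightarrow> 0" by (simp add: divide_inverse_commute)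
  then show ?thesis using tendsto_mult_right_zero by blast
qed

lemma gronwall:
  fixes m :: "real \<Rightarrow> real"
  assumes cont: "continuous_on UNIV m" and nn: "\<And>t. 0 \<le> t \<Longrightarrow> 0 \<le> m t"
    and le: "\<And>t. 0 \<le> t \<Longrightarrow> m t \<le> C * (LINT s:{0..t}|lborel. m s)" and C: "0 \<le> C"
    and T: "0 \<le> T"
  shows "m T = 0"
proof -
  obtain M where M: "\<forall>s\<in>{0..T}. \<bar>m s\<bar> \<le> M" using cbound[OF cont] by blast
  have mm: "m \<in> borel_measurable borel" using cont by (simp add: borel_measurable_continuous_onI)
  have ind: "\<forall>s\<in>{0..T}. m s \<le> M * (C * s) ^ n / fact n" for n
  proof (induction n)
    case 0 then show ?case using M by auto
  next
    case (Suc n)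
    show ?case
    proof
      fix s assume s: "s \<in> {0..T}"
      have fi: "set_integrable lborel {0..s} m"
        by (rule SI[OF mm, where B=M]) (use M s in auto)
      have "m s \<le> C * (LINT u:{0..s}|lborel. m u)" using le s by auto
      also have "\<dots> \<le> M * (C * s) ^ Suc n / fact (Suc n)"
        by (rule pow_step[OF _ C fi]) (use s Suc in auto)
      finally show "m s \<le> M * (C * s) ^ Suc n / fact (Suc n)" .
    qed
  qed
  have "m T \<le> 0"
  proof (rule LIMSEQ_le_const[OF exp_term_lim[of M "C*T"]], intro exI allI impI)
    fix n show "m T \<le> M * ((C * T) ^ n / fact n)" using ind[of n] T by auto
  qed
  then show ?thesis using nn[OF T] by auto
qed


lemma int_nonneg:
  fixes f :: "real \<Rightarrow> real"
  assumes "\<And>s. s \<in> A \<Longrightarrow> 0 \<le> f s"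
  shows "0 \<le> (LINT s:A|lborel. f s)"
  unfolding set_lebesgue_integral_def
  by (intro integral_nonneg_AE AE_I2) (use assms in \<open>auto simp: indicator_def\<close>)

lemma abs_int:
  fixes f g :: "real \<Rightarrow> real"
  assumes fi: "set_integrable lborel A f" and gi: "set_integrable lborel A g"
    and le: "\<And>s. s \<in> A \<Longrightarrow> \<bar>f s\<bar> \<le> g s"
  shows "\<bar>LINT s:A|lborel. f s\<bar> \<le> (LINT s:A|lborel. g s)"
proof -
  have "(LINT s:A|lborel. f s) \<le> (LINT s:A|lborel. g s)"
    by (rule set_integral_mono[OF fi gi]) (use le in force)
  moreover have "(LINT s:A|lborel. - f s) \<le> (LINT s:A|lborel. g s)"
  proof (rule set_integral_mono[OF _ gi])
    show "set_integrable lborel A (\<lambda>s. - f s)" using fi by (simp add: set_integrable_def)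
    show "\<And>s. s \<in> A \<Longrightarrow> - f s \<le> g s" using le by fastforce
  qed
  ultimately show ?thesis using set_integral_uminus[OF fi] by linarith
qed

definition Gf :: "(real \<Rightarrow> 's::finite \<Rightarrow> 's \<Rightarrow> real) \<Rightarrow> (real \<Rightarrow> 's \<Rightarrow> real) \<Rightarrow> real \<Rightarrow> 's \<Rightarrow> real" where
  "Gf q p s y = (\<Sum>x\<in>UNIV. p s x * q s x y) - p s y * (\<Sum>z\<in>UNIV. q s y z)"

definition fw :: "(real \<Rightarrow> 's::finite \<Rightarrow> 's \<Rightarrow> real) \<Rightarrow> 's \<Rightarrow> (real \<Rightarrow> 's \<Rightarrow> real) \<Rightarrow> bool" where
  "fw q x0 p \<longleftrightarrow> (\<forall>y. continuous_on UNIV (\<lambda>t. p t y)) \<and>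
     (\<forall>t\<ge>0. \<forall>y. p t y = (if y = x0 then 1 else 0) + (LINT s:{0..t}|lborel. Gf q p s y))"

lemma forward_fw:
  assumes "forward_law q x0 p"
  shows "fw q x0 (\<lambda>t. p (max 0 t))"
proof -
  have c: "continuous_on UNIV (\<lambda>t. p (max 0 t) y)" for y
    by (rule continuous_on_compose2[of "{0..}" "\<lambda>t. p t y"]) 
       (use assms in \<open>auto simp: forward_law_def intro!: continuous_intros\<close>)
  have e: "(LINT s:{0..t}|lborel. Gf q (\<lambda>t. p (max 0 t)) s y) = (LINT s:{0..t}|lborel. Gf q p s y)" for t y
    by (rule set_lebesgue_integral_cong) (auto simp: Gf_def)
  have "p (max 0 t) y = (if y = x0 then 1 else 0) + (LINT s:{0..t}|lborel. Gf q (\<lambda>t. p (max 0 t)) s y)"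
    if "0 \<le> t" for t y
  proof -
    have "p (max 0 t) y = p t y" using that by simp
    also have "\<dots> = (if y = x0 then 1 else 0) + (LINT s:{0..t}|lborel. Gf q p s y)"
      using assms that unfolding forward_law_def Gf_def by blast
    finally show ?thesis by (simp only: e)
  qed
  then show ?thesis using c unfolding fw_def by blast
qed

lemma cont_meas: "continuous_on UNIV (f::real\<Rightarrow>real) \<Longrightarrow> f \<in> borel_measurable borel"
  by (simp add: borel_measurable_continuous_onI)


lemma lump_alg:
  fixes Q :: "'s::finite \<Rightarrow> 's \<Rightarrow> real" and R :: "'t::finite \<Rightarrow> 't \<Rightarrow> real"
    and P :: "'s \<Rightarrow> real" and \<pi> :: "'s \<Rightarrow> 't"
  assumes hyp: "\<And>s u. u \<noteq> \<pi> s \<Longrightarrow> (\<Sum>s'\<in>{s'. \<pi> s' = u}. Q s s') = R (\<pi> s) u"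
  shows "(\<Sum>s\<in>{s. \<pi> s = u}. (\<Sum>x\<in>UNIV. P x * Q x s) - P s * (\<Sum>z\<in>UNIV. Q s z))
       = (\<Sum>u'\<in>UNIV. (\<Sum>s\<in>{s. \<pi> s = u'}. P s) * R u' u)
         - (\<Sum>s\<in>{s. \<pi> s = u}. P s) * (\<Sum>u''\<in>UNIV. R u u'')"
proof -
  define F where "F = {s. \<pi> s = u}"
  define QF where "QF x = (\<Sum>s\<in>F. Q x s)" for x
  have T1: "(\<Sum>s\<in>F. \<Sum>x\<in>UNIV. P x * Q x s) = (\<Sum>x\<in>UNIV. P x * R (\<pi> x) u) + (\<Sum>x\<in>F. P x * (QF x - R u u))"
  proof -
    have "(\<Sum>s\<in>F. \<Sum>x\<in>UNIV. P x * Q x s) = (\<Sum>x\<in>UNIV. P x * QF x)"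
      unfolding QF_def by (subst sum.swap) (simp add: sum_distrib_left)
    also have "\<dots> = (\<Sum>x\<in>UNIV. P x * R (\<pi> x) u + (if x \<in> F then P x * (QF x - R u u) else 0))"
      by (rule sum.cong) (auto simp: F_def QF_def hyp algebra_simps)
    also have "\<dots> = (\<Sum>x\<in>UNIV. P x * R (\<pi> x) u) + (\<Sum>x\<in>F. P x * (QF x - R u u))"
      by (simp add: sum.distrib sum.If_cases)
    finally show ?thesis .
  qed
  have rs: "(\<Sum>z\<in>UNIV. Q s z) = QF s - R u u + (\<Sum>u''\<in>UNIV. R u u'')" if "s \<in> F" for s
  proof -
    have "(\<Sum>z\<in>UNIV. Q s z) = (\<Sum>u''\<in>UNIV. \<Sum>z\<in>{z\<in>UNIV. \<pi> z = u''}. Q s z)"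
      by (rule sum.group[symmetric]) auto
    also have "\<dots> = (\<Sum>u''\<in>UNIV. if u'' = u then QF s else R u u'')"
      by (rule sum.cong) (use that hyp in \<open>auto simp: F_def QF_def\<close>)
    also have "\<dots> = QF s - R u u + (\<Sum>u''\<in>UNIV. R u u'')"
      by (simp add: sum.remove[of UNIV u] sum.remove[of UNIV u "\<lambda>u''. R u u''"])
    finally show ?thesis .
  qed
  have T2: "(\<Sum>s\<in>F. P s * (\<Sum>z\<in>UNIV. Q s z)) = (\<Sum>s\<in>F. P s * (QF s - R u u)) + (\<Sum>s\<in>F. P s) * (\<Sum>u''\<in>UNIV. R u u'')"
  proof -
    have "(\<Sum>s\<in>F. P s * (\<Sum>z\<in>UNIV. Q s z)) = (\<Sum>s\<in>F. P s * (QF s - R u u) + P s * (\<Sum>u''\<in>UNIV. R u u''))"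
      by (rule sum.cong) (auto simp: rs algebra_simps)
    then show ?thesis by (simp add: sum.distrib sum_distrib_right)
  qed
  have T3: "(\<Sum>u'\<in>UNIV. (\<Sum>s\<in>{s. \<pi> s = u'}. P s) * R u' u) = (\<Sum>x\<in>UNIV. P x * R (\<pi> x) u)"
  proof -
    have "(\<Sum>u'\<in>UNIV. (\<Sum>s\<in>{s. \<pi> s = u'}. P s) * R u' u) = (\<Sum>u'\<in>UNIV. \<Sum>s\<in>{s\<in>UNIV. \<pi> s = u'}. P s * R (\<pi> s) u)"
      by (auto simp: sum_distrib_right intro!: sum.cong)
    also have "\<dots> = (\<Sum>x\<in>UNIV. P x * R (\<pi> x) u)" by (rule sum.group) auto
    finally show ?thesis .
  qed
  show ?thesis unfolding F_def[symmetric] T3 sum_subtractf T1 T2 by simp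
qed


lemma int_point: "(LINT s:{0..0}|lborel. f s) = (0::real)" for f :: "real \<Rightarrow> real"
proof -
  show ?thesis
    unfolding set_lebesgue_integral_def
    by (rule integral_eq_zero_AE, rule eventually_mono[OF AE_lborel_singleton[of 0]]) (auto simp: indicator_def antisym_conv)
qed

lemma cont_all:
  fixes f :: "real \<Rightarrow> real"
  assumes "\<And>T. 0 \<le> T \<Longrightarrow> continuous_on {..T} f"
  shows "continuous_on UNIV f"
proof (rule continuous_at_imp_continuous_on, intro ballI)
  fix x :: real
  have "continuous_on {..max 0 x + 1} f" using assms by simp
  moreover have "x \<in> interior {..max 0 x + 1}" by simp
  ultimately show "isCont f x" by (rule continuous_on_interior)
qed

lemma int_empty: "t < 0 \<Longrightarrow> (LINT s:{0..t}|lborel. f s) = (0::real)" for t :: real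
proof -
  assume "t < 0" then have "{0..t} = ({}::real set)" by auto
  then show ?thesis by (simp add: set_lebesgue_integral_def)
qed

lemma int_emptyset[simp]: "(LINT s:{}|lborel. f s) = (0::real)"
  by (simp add: set_lebesgue_integral_def)

lemma cont_int:
  fixes f :: "real \<Rightarrow> real"
  assumes fi: "\<And>a b. set_integrable lborel {a..b} f"
  shows "continuous_on UNIV (\<lambda>t. LINT s:{0..t}|lborel. f s)"
proof (rule cont_all)
  fix T :: real assume T: "0 \<le> T"
  have "continuous_on ({..0} \<union> {0..T}) (\<lambda>t. LINT s:{0..t}|lborel. f s)"
  proof (rule continuous_on_closed_Un)
    have "continuous_on {..0} (\<lambda>t. 0::real)" by simp
    moreover have "(LINT s:{0..t}|lborel. f s) = 0" if "t \<in> {..0}" for t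
      using that int_empty[of t f] int_point[of f] by (cases "t < 0") auto
    ultimately show "continuous_on {..0} (\<lambda>t. LINT s:{0..t}|lborel. f s)"
      using continuous_on_cong by (smt (verit, best))
    have "f integrable_on {0..T}" by (rule set_borel_integral_eq_integral(1)[OF fi])
    then have "continuous_on {0..T} (\<lambda>t. integral {0..t} f)" by (rule indefinite_integral_continuous_1)
    moreover have "(LINT s:{0..t}|lborel. f s) = integral {0..t} f" for t
      by (rule set_borel_integral_eq_integral(2)[OF fi])
    ultimately show "continuous_on {0..T} (\<lambda>t. LINT s:{0..t}|lborel. f s)" by simp
  qed auto
  moreover have "{..0} \<union> {0..T} = {..T}" using T by auto
  ultimately show "continuous_on {..T} (\<lambda>t. LINT s:{0..t}|lborel. f s)" by simp
qed

locale rt =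
  fixes q :: "real \<Rightarrow> 's::finite \<Rightarrow> 's \<Rightarrow> real" and K :: real
  assumes qm[measurable]: "\<And>x y. (\<lambda>t. q t x y) \<in> borel_measurable borel"
    and qb: "\<And>t x y. \<bar>q t x y\<bar> \<le> K"
begin

lemma K0: "0 \<le> K" using qb[of 0 undefined undefined] by linarith

lemma Gm:
  assumes [measurable]: "\<And>x. (\<lambda>t. p t x) \<in> borel_measurable borel"
  shows "(\<lambda>s. Gf q p s y) \<in> borel_measurable borel"
  unfolding Gf_def by measurable

lemma Gb: "\<bar>Gf q p s y\<bar> \<le> K * (CARD('s) + 1) * (\<Sum>x\<in>UNIV. \<bar>p s x\<bar>)"
proof -
  let ?S = "\<Sum>x\<in>UNIV. \<bar>p s x\<bar>"
  have "\<bar>\<Sum>x\<in>UNIV. p s x * q s x y\<bar> \<le> (\<Sum>x\<in>UNIV. \<bar>p s x\<bar> * K)"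
    by (rule order_trans[OF sum_abs]) (auto intro!: sum_mono simp: abs_mult intro: mult_left_mono qb)
  also have "\<dots> = K * ?S" by (simp add: sum_distrib_left mult.commute)
  finally have 1: "\<bar>\<Sum>x\<in>UNIV. p s x * q s x y\<bar> \<le> K * ?S" .
  have "(\<Sum>z\<in>UNIV. \<bar>q s y z\<bar>) \<le> (\<Sum>z\<in>(UNIV::'s set). K)"
    by (rule sum_mono) (rule qb)
  then have "\<bar>\<Sum>z\<in>UNIV. q s y z\<bar> \<le> (\<Sum>z\<in>(UNIV::'s set). K)"
    using sum_abs order_trans by blast
  then have 2: "\<bar>\<Sum>z\<in>UNIV. q s y z\<bar> \<le> CARD('s) * K" by simp
  have 3: "\<bar>p s y\<bar> \<le> ?S" by (rule member_le_sum) auto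
  have "\<bar>p s y * (\<Sum>z\<in>UNIV. q s y z)\<bar> \<le> ?S * (CARD('s) * K)"
    unfolding abs_mult by (rule mult_mono[OF 3 2]) auto
  with 1 show ?thesis unfolding Gf_def by (simp add: algebra_simps)
qed

lemma Gdiff: "Gf q p1 s y - Gf q p2 s y = Gf q (\<lambda>s x. p1 s x - p2 s x) s y"
  by (simp add: Gf_def sum_subtractf algebra_simps)

lemma Gint:
  assumes c: "\<And>x. continuous_on UNIV (\<lambda>t. p t x)"
  shows "set_integrable lborel {a..b} (\<lambda>s. Gf q p s y)"
proof -
  have "continuous_on UNIV (\<lambda>t. \<Sum>x\<in>UNIV. \<bar>p t x\<bar>)"
    by (intro continuous_intros c)
  then obtain B where B: "\<forall>s\<in>{a..b}. \<bar>\<Sum>x\<in>UNIV. \<bar>p s x\<bar>\<bar> \<le> B" using cbound by blast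
  show ?thesis
  proof (rule SI[where B="K * (CARD('s) + 1) * B"])
    show "(\<lambda>s. Gf q p s y) \<in> borel_measurable borel" by (rule Gm) (use c cont_meas in auto)
    fix s assume "s \<in> {a..b}"
    then have "(\<Sum>x\<in>UNIV. \<bar>p s x\<bar>) \<le> B" using B by auto
    then show "\<bar>Gf q p s y\<bar> \<le> K * (CARD('s) + 1) * B"
      using Gb[of p s y] K0 by (smt (verit) mult_left_mono mult_nonneg_nonneg of_nat_0_le_iff)
  qed
qed


lemma sumabs_int:
  fixes p :: "real \<Rightarrow> 's \<Rightarrow> real"
  assumes c: "\<And>x. continuous_on UNIV (\<lambda>t. p t x)"
  shows "set_integrable lborel {a..b} (\<lambda>s. \<Sum>x\<in>B. \<bar>p s x\<bar>)"
proof -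
  have cc: "continuous_on UNIV (\<lambda>t. \<Sum>x\<in>B. \<bar>p t x\<bar>)"
    by (rule continuous_on_sum, rule continuous_on_rabs, rule c)
  then obtain M where "\<forall>s\<in>{a..b}. \<bar>\<Sum>x\<in>B. \<bar>p s x\<bar>\<bar> \<le> M" using cbound by blast
  then show ?thesis by (intro SI[where B=M] cont_meas[OF cc]) auto
qed

lemma Zl:
  assumes c: "\<And>x. continuous_on UNIV (\<lambda>t. p t x)"
    and eq: "\<And>t y. 0 \<le> t \<Longrightarrow> y \<in> B \<Longrightarrow> p t y = (LINT s:{0..t}|lborel. Gf q p s y)"
    and blk: "\<And>t x y. x \<notin> B \<Longrightarrow> y \<in> B \<Longrightarrow> q t x y = 0"
    and t: "0 \<le> t" and y: "y \<in> B"
  shows "p t y = 0"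
proof -
  define m where "m t = (\<Sum>y\<in>B. \<bar>p t y\<bar>)" for t
  define c0 where "c0 = K * (CARD('s) + 1)"
  have c00: "0 \<le> c0" using K0 by (simp add: c0_def)
  have mc: "continuous_on UNIV m" unfolding m_def by (auto intro!: continuous_intros c)
  have mi: "set_integrable lborel {0..t} m" for t unfolding m_def by (rule sumabs_int[OF c])
  have gb: "\<bar>Gf q p s y\<bar> \<le> c0 * m s" if "y \<in> B" for s y
  proof -
    have "(\<Sum>x\<in>UNIV. p s x * q s x y) = (\<Sum>x\<in>B. p s x * q s x y)"
      by (rule sum.mono_neutral_right) (use blk that in auto)
    also have "\<bar>\<dots>\<bar> \<le> (\<Sum>x\<in>B. \<bar>p s x\<bar> * K)"
      by (rule order_trans[OF sum_abs]) (auto intro!: sum_mono simp: abs_mult intro: mult_left_mono qb)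
    also have "\<dots> = K * m s" by (simp add: m_def sum_distrib_left mult.commute)
    finally have 1: "\<bar>\<Sum>x\<in>UNIV. p s x * q s x y\<bar> \<le> K * m s" .
    have "(\<Sum>z\<in>UNIV. \<bar>q s y z\<bar>) \<le> (\<Sum>z\<in>(UNIV::'s set). K)"
      by (rule sum_mono) (rule qb)
    then have "\<bar>\<Sum>z\<in>UNIV. q s y z\<bar> \<le> (\<Sum>z\<in>(UNIV::'s set). K)"
      using sum_abs order_trans by blast
    then have 2: "\<bar>\<Sum>z\<in>UNIV. q s y z\<bar> \<le> CARD('s) * K" by simp
    have 3: "\<bar>p s y\<bar> \<le> m s" unfolding m_def by (rule member_le_sum) (use that in auto)
    have "\<bar>p s y * (\<Sum>z\<in>UNIV. q s y z)\<bar> \<le> m s * (CARD('s) * K)"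
      unfolding abs_mult by (rule mult_mono[OF 3 2]) (auto simp: m_def intro: sum_nonneg)
    with 1 show ?thesis unfolding Gf_def c0_def by (simp add: algebra_simps)
  qed
  have py: "\<bar>p t y\<bar> \<le> c0 * (LINT s:{0..t}|lborel. m s)" if "0 \<le> t" "y \<in> B" for t y
  proof -
    have "\<bar>p t y\<bar> = \<bar>LINT s:{0..t}|lborel. Gf q p s y\<bar>" using eq that by simp
    also have "\<dots> \<le> (LINT s:{0..t}|lborel. c0 * m s)"
      by (rule abs_int[OF Gint[OF c]]) (use mi set_integrable_mult_right gb that in auto)
    also have "\<dots> = c0 * (LINT s:{0..t}|lborel. m s)" by (rule set_integral_mult_right)
    finally show ?thesis .
  qed
  have "m t = 0"
  proof (rule gronwall[OF mc _ _ _ t, where C="CARD('s) * c0"])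
    show "0 \<le> m t" for t by (auto simp: m_def intro: sum_nonneg)
    show "0 \<le> real CARD('s) * c0" using c00 by simp
    fix t :: real assume t: "0 \<le> t"
    have I0: "0 \<le> (LINT s:{0..t}|lborel. m s)" by (rule int_nonneg) (auto simp: m_def intro: sum_nonneg)
    have "m t \<le> (\<Sum>y\<in>B. c0 * (LINT s:{0..t}|lborel. m s))"
      unfolding m_def[of t] by (rule sum_mono) (use py t in auto)
    also have "\<dots> = card B * (c0 * (LINT s:{0..t}|lborel. m s))" by simp
    also have "\<dots> \<le> CARD('s) * (c0 * (LINT s:{0..t}|lborel. m s))"
      by (rule mult_right_mono) (use I0 c00 card_mono[of UNIV B] in auto)
    finally show "m t \<le> real CARD('s) * c0 * (LINT s:{0..t}|lborel. m s)" by simp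
  qed
  then show ?thesis using y unfolding m_def by (simp add: sum_nonneg_eq_0_iff)
qed

lemma uniq:
  assumes f1: "fw q x0 p1" and f2: "fw q x0 p2" and t: "0 \<le> t"
  shows "p1 t y = p2 t y"
proof -
  define d where "d t x = p1 t x - p2 t x" for t x
  have c1: "\<And>x. continuous_on UNIV (\<lambda>t. p1 t x)" and c2: "\<And>x. continuous_on UNIV (\<lambda>t. p2 t x)"
    using f1 f2 unfolding fw_def by auto
  have dc: "continuous_on UNIV (\<lambda>t. d t x)" for x unfolding d_def by (intro continuous_intros c1 c2)
  have "d t y = 0"
  proof (rule Zl[OF dc, where B=UNIV])
    fix t y assume t: "0 \<le> (t::real)"
    have "d t y = (LINT s:{0..t}|lborel. Gf q p1 s y) - (LINT s:{0..t}|lborel. Gf q p2 s y)"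
      using f1 f2 t unfolding fw_def d_def by auto
    also have "\<dots> = (LINT s:{0..t}|lborel. Gf q p1 s y - Gf q p2 s y)"
      by (rule set_integral_diff(2)[symmetric]) (rule Gint, use c1 c2 in auto)+
    also have "\<dots> = (LINT s:{0..t}|lborel. Gf q d s y)"
      by (simp add: Gdiff d_def[abs_def])
    finally show "d t y = (LINT s:{0..t}|lborel. Gf q d s y)" .
  qed (use t in auto)
  then show ?thesis by (simp add: d_def)
qed


lemma fw0: "fw q x0 p \<Longrightarrow> p 0 y = (if y = x0 then 1 else 0)"
  using int_point[of "\<lambda>s. Gf q p s y"] unfolding fw_def by (metis add_0_right order_refl)

lemma pos:
  assumes f: "fw q x0 p" and qn: "\<And>t x y. 0 \<le> q t x y" and T: "0 \<le> T"
  shows "0 \<le> p T y0"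
proof -
  have c: "\<And>x. continuous_on UNIV (\<lambda>t. p t x)" using f unfolding fw_def by auto
  define n where "n t = (\<Sum>y\<in>UNIV. max 0 (- p t y))" for t
  have nc: "continuous_on UNIV n" unfolding n_def by (auto intro!: continuous_intros c)
  have nn: "0 \<le> n t" for t unfolding n_def by (auto intro: sum_nonneg)
  have ni: "set_integrable lborel {a..b} n" for a b
  proof -
    obtain M where "\<forall>s\<in>{a..b}. \<bar>n s\<bar> \<le> M" using cbound[OF nc] by blast
    then show ?thesis by (intro SI[where B=M] cont_meas[OF nc]) auto
  qed
  have I0: "0 \<le> (LINT s:{0..t}|lborel. n s)" for t by (rule int_nonneg) (use nn in auto)
  have key: "max 0 (- p t y) \<le> K * (LINT s:{0..t}|lborel. n s)" if t: "0 \<le> t" for t y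
  proof (cases "0 \<le> p t y")
    case True then show ?thesis using I0[of t] K0 by simp
  next
    case False
    define S where "S = {s\<in>{0..t}. 0 \<le> p s y}"
    have "0 \<in> S" using fw0[OF f] t by (auto simp: S_def)
    have Sc: "closed S"
    proof -
      have "S = {0..t} \<inter> (\<lambda>s. p s y) -` {0..}" by (auto simp: S_def)
      also have "closed \<dots>" by (intro closed_Int closed_vimage c) auto
      finally show ?thesis .
    qed
    have Sb: "bdd_above S" by (auto simp: S_def bdd_above_def)
    define a where "a = Sup S"
    have aS: "a \<in> S" unfolding a_def using closed_contains_Sup[OF _ Sb Sc] \<open>0 \<in> S\<close> by blast
    then have a0: "0 \<le> a" "a \<le> t" "0 \<le> p a y" by (auto simp: S_def)
    have neg: "p s y < 0" if "a < s" "s \<le> t" for s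
    proof (rule ccontr)
      assume "\<not> p s y < 0"
      then have "s \<in> S" using that a0 by (auto simp: S_def)
      then have "s \<le> a" unfolding a_def by (rule cSup_upper[OF _ Sb])
      then show False using that by simp
    qed
    define g where "g s = Gf q p s y" for s
    have gi: "set_integrable lborel {u..v} g" for u v unfolding g_def by (rule Gint[OF c])
    define h where "h s = indicator {a<..} s * g s" for s
    have hi: "set_integrable lborel {0..t} h"
    proof -
      have "integrable lborel (\<lambda>s. indicator {a<..} s *\<^sub>R (indicator {0..t} s *\<^sub>R g s))"
        by (rule integrable_mult_indicator) (use gi in \<open>auto simp: set_integrable_def\<close>)
      then show ?thesis unfolding set_integrable_def h_def by (simp add: mult.left_commute)
    qed
    have split: "(LINT s:{0..t}|lborel. g s) = (LINT s:{0..a}|lborel. g s) + (LINT s:{0..t}|lborel. h s)"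
    proof -
      have "(LINT s:{0..t}|lborel. g s) = (LINT s|lborel. indicator {0..a} s *\<^sub>R g s + indicator {0..t} s *\<^sub>R h s)"
        unfolding set_lebesgue_integral_def
        by (rule Bochner_Integration.integral_cong) (use a0 in \<open>auto simp: h_def indicator_def\<close>)
      also have "\<dots> = (LINT s:{0..a}|lborel. g s) + (LINT s:{0..t}|lborel. h s)"
        unfolding set_lebesgue_integral_def
        by (rule Bochner_Integration.integral_add) (use gi hi in \<open>auto simp: set_integrable_def\<close>)
      finally show ?thesis .
    qed
    have hlow: "- K * n s \<le> h s" if "s \<in> {0..t}" for s
    proof (cases "a < s")
      case False then show ?thesis using nn[of s] K0 by (simp add: h_def)
    next
      case True
      then have ps: "p s y < 0" using neg that by auto
      have "(\<Sum>x\<in>UNIV. - K * max 0 (- p s x)) \<le> (\<Sum>x\<in>UNIV. p s x * q s x y)"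
      proof (rule sum_mono)
        fix x
        show "- K * max 0 (- p s x) \<le> p s x * q s x y"
        proof (cases "0 \<le> p s x")
          case True then show ?thesis using qn[of s x y] K0 by simp
        next
          case False
          then have "p s x * K \<le> p s x * q s x y"
            using qb[of s x y] by (intro mult_left_mono_neg) auto
          then show ?thesis using False by simp
        qed
      qed
      then have "- K * n s \<le> (\<Sum>x\<in>UNIV. p s x * q s x y)"
        by (simp add: n_def sum_distrib_left)
      moreover have "0 \<le> - p s y * (\<Sum>z\<in>UNIV. q s y z)"
        using ps by (intro mult_nonneg_nonneg sum_nonneg qn) auto
      ultimately show ?thesis using True by (simp add: h_def g_def Gf_def)
    qed
    have "(LINT s:{0..t}|lborel. - K * n s) \<le> (LINT s:{0..t}|lborel. h s)"
    proof (rule set_integral_mono[OF _ hi hlow])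
      have "set_integrable lborel {0..t} (\<lambda>s. (- K) * n s)" by (rule set_integrable_mult_right) (rule ni)
      then show "set_integrable lborel {0..t} (\<lambda>s. - K * n s)" by simp
    qed
    then have hl: "- K * (LINT s:{0..t}|lborel. n s) \<le> (LINT s:{0..t}|lborel. h s)"
      using set_integral_mult_right[where a="-K" and f=n and A="{0..t}" and M=lborel] by simp
    have pt: "p t y = (if y = x0 then 1 else 0) + (LINT s:{0..t}|lborel. g s)"
      using f t unfolding fw_def g_def by auto
    have pa: "p a y = (if y = x0 then 1 else 0) + (LINT s:{0..a}|lborel. g s)"
      using f a0 unfolding fw_def g_def by auto
    have "p t y = p a y + (LINT s:{0..t}|lborel. h s)" using pt pa split by simp
    then show ?thesis using hl a0 False by simp
  qed
  have "n T = 0"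
  proof (rule gronwall[OF nc _ _ _ T, where C="CARD('s) * K"])
    show "0 \<le> n t" for t by (rule nn)
    show "0 \<le> real CARD('s) * K" using K0 by simp
    fix t :: real assume t: "0 \<le> t"
    have "n t \<le> (\<Sum>y\<in>(UNIV::'s set). K * (LINT s:{0..t}|lborel. n s))"
      unfolding n_def[of t] by (rule sum_mono) (use key t in auto)
    then show "n t \<le> real CARD('s) * K * (LINT s:{0..t}|lborel. n s)" by simp
  qed
  then have "max 0 (- p T y0) = 0" unfolding n_def
    by (subst (asm) sum_nonneg_eq_0_iff) auto
  then show ?thesis by simp
qed


lemma lump:
  fixes \<pi> :: "'s \<Rightarrow> 't::finite" and R :: "real \<Rightarrow> 't \<Rightarrow> 't \<Rightarrow> real"
  assumes f: "fw q s0 P"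
    and hyp: "\<And>r s u. u \<noteq> \<pi> s \<Longrightarrow> (\<Sum>s'\<in>{s'. \<pi> s' = u}. q r s s') = R r (\<pi> s) u"
  shows "fw R (\<pi> s0) (\<lambda>t u. \<Sum>s\<in>{s. \<pi> s = u}. P t s)"
proof -
  have c: "\<And>x. continuous_on UNIV (\<lambda>t. P t x)" using f unfolding fw_def by auto
  have eq: "(\<Sum>s\<in>{s. \<pi> s = u}. P t s) = (if u = \<pi> s0 then 1 else 0) +
       (LINT r:{0..t}|lborel. Gf R (\<lambda>t u. \<Sum>s\<in>{s. \<pi> s = u}. P t s) r u)" if t: "0 \<le> t" for t u
  proof -
    have "(\<Sum>s\<in>{s. \<pi> s = u}. P t s) = (\<Sum>s\<in>{s. \<pi> s = u}. (if s = s0 then 1 else 0) + (LINT r:{0..t}|lborel. Gf q P r s))"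
      using f t unfolding fw_def by auto
    also have "\<dots> = (if u = \<pi> s0 then 1 else 0) + (\<Sum>s\<in>{s. \<pi> s = u}. (LINT r:{0..t}|lborel. Gf q P r s))"
      by (simp add: sum.distrib sum.delta)
    also have "(\<Sum>s\<in>{s. \<pi> s = u}. (LINT r:{0..t}|lborel. Gf q P r s)) = (LINT r:{0..t}|lborel. (\<Sum>s\<in>{s. \<pi> s = u}. Gf q P r s))"
      unfolding set_lebesgue_integral_def scaleR_sum_right
      by (rule Bochner_Integration.integral_sum[symmetric]) (use Gint[OF c] in \<open>auto simp: set_integrable_def\<close>)
    also have "\<dots> = (LINT r:{0..t}|lborel. Gf R (\<lambda>t u. \<Sum>s\<in>{s. \<pi> s = u}. P t s) r u)"
      unfolding Gf_def
      by (rule set_lebesgue_integral_cong) (auto intro!: lump_alg[where R="R r" and Q="q r" for r] hyp)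
    finally show ?thesis .
  qed
  show ?thesis unfolding fw_def using eq by (auto intro!: continuous_intros c)
qed


primrec pic :: "'s \<Rightarrow> nat \<Rightarrow> real \<Rightarrow> 's \<Rightarrow> real" where
  "pic x0 0 = (\<lambda>t y. if y = x0 then 1 else 0)"
| "pic x0 (Suc n) = (\<lambda>t y. (if y = x0 then 1 else 0) + (LINT s:{0..t}|lborel. Gf q (pic x0 n) s y))"

lemma pic_cont: "continuous_on UNIV (\<lambda>t. pic x0 n t y)"
proof (induction n arbitrary: y)
  case 0 then show ?case by simp
next
  case (Suc n)
  have "continuous_on UNIV (\<lambda>t. LINT s:{0..t}|lborel. Gf q (pic x0 n) s y)"
    by (rule cont_int, rule Gint) (use Suc in auto)
  then show ?case by (auto intro!: continuous_intros)
qed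

definition CC where "CC = CARD('s) * (K * (CARD('s) + 1))"

lemma CC0: "0 \<le> CC" using K0 by (simp add: CC_def)

lemma Gsum:
  assumes c: "\<And>x. continuous_on UNIV (\<lambda>t. p t x)" and t: "0 \<le> t"
  shows "(\<Sum>y\<in>UNIV. \<bar>LINT s:{0..t}|lborel. Gf q p s y\<bar>) \<le> CC * (LINT s:{0..t}|lborel. \<Sum>x\<in>UNIV. \<bar>p s x\<bar>)"
proof -
  have "\<bar>LINT s:{0..t}|lborel. Gf q p s y\<bar> \<le> K * (CARD('s) + 1) * (LINT s:{0..t}|lborel. \<Sum>x\<in>UNIV. \<bar>p s x\<bar>)" for y
  proof -
    have "\<bar>LINT s:{0..t}|lborel. Gf q p s y\<bar> \<le> (LINT s:{0..t}|lborel. K * (CARD('s) + 1) * (\<Sum>x\<in>UNIV. \<bar>p s x\<bar>))"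
      by (rule abs_int[OF Gint[OF c] set_integrable_mult_right[OF sumabs_int[OF c]] Gb])
    also have "\<dots> = K * (CARD('s) + 1) * (LINT s:{0..t}|lborel. \<Sum>x\<in>UNIV. \<bar>p s x\<bar>)"
      by (rule set_integral_mult_right)
    finally show ?thesis .
  qed
  then have "(\<Sum>y\<in>UNIV. \<bar>LINT s:{0..t}|lborel. Gf q p s y\<bar>) \<le> (\<Sum>y\<in>(UNIV::'s set). K * (CARD('s) + 1) * (LINT s:{0..t}|lborel. \<Sum>x\<in>UNIV. \<bar>p s x\<bar>))"
    by (rule sum_mono)
  then show ?thesis by (simp add: CC_def)
qed

definition dd where "dd x0 n t y = pic x0 (Suc n) t y - pic x0 n t y"

lemma dd_cont: "continuous_on UNIV (\<lambda>t. dd x0 n t y)"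
  unfolding dd_def by (intro continuous_intros pic_cont)

lemma pic_neg: "t < 0 \<Longrightarrow> pic x0 n t y = (if y = x0 then 1 else 0)"
  by (cases n) (auto simp: int_empty)

lemma dd_neg: "t < 0 \<Longrightarrow> dd x0 n t y = 0"
  by (simp add: dd_def pic_neg)

lemma dd_0: "0 \<le> t \<Longrightarrow> dd x0 0 t y = (LINT s:{0..t}|lborel. Gf q (pic x0 0) s y)"
  by (simp add: dd_def)

lemma dd_Suc: "0 \<le> t \<Longrightarrow> dd x0 (Suc n) t y = (LINT s:{0..t}|lborel. Gf q (dd x0 n) s y)"
proof -
  have "dd x0 (Suc n) t y = (LINT s:{0..t}|lborel. Gf q (pic x0 (Suc n)) s y) - (LINT s:{0..t}|lborel. Gf q (pic x0 n) s y)"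
    by (simp add: dd_def)
  also have "\<dots> = (LINT s:{0..t}|lborel. Gf q (pic x0 (Suc n)) s y - Gf q (pic x0 n) s y)"
    by (rule set_integral_diff(2)[symmetric]) (rule Gint, rule pic_cont)+
  also have "\<dots> = (LINT s:{0..t}|lborel. Gf q (dd x0 n) s y)"
    by (simp add: Gdiff dd_def[abs_def])
  finally show ?thesis .
qed

lemma dd_bound: "0 \<le> t \<Longrightarrow> (\<Sum>y\<in>UNIV. \<bar>dd x0 n t y\<bar>) \<le> 1 * (CC * t) ^ Suc n / fact (Suc n)"
proof (induction n arbitrary: t)
  case 0
  have "(\<Sum>y\<in>UNIV. \<bar>dd x0 0 t y\<bar>) = (\<Sum>y\<in>UNIV. \<bar>LINT s:{0..t}|lborel. Gf q (pic x0 0) s y\<bar>)"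
    using 0 by (simp add: dd_0)
  also have "\<dots> \<le> CC * (LINT s:{0..t}|lborel. \<Sum>x\<in>UNIV. \<bar>pic x0 0 s x\<bar>)"
    by (rule Gsum[OF pic_cont 0])
  also have "\<dots> \<le> 1 * (CC * t) ^ Suc 0 / fact (Suc 0)"
  proof (rule pow_step[OF 0 CC0 sumabs_int[OF pic_cont]])
    fix s :: real
    have "(\<Sum>x\<in>UNIV. \<bar>pic x0 0 s x\<bar>) = (\<Sum>x\<in>UNIV. if x = x0 then 1 else 0)"
      by (rule sum.cong) auto
    then show "(\<Sum>x\<in>UNIV. \<bar>pic x0 0 s x\<bar>) \<le> 1 * (CC * s) ^ 0 / fact 0" by simp
  qed
  finally show ?case .
next
  case (Suc n)
  have "(\<Sum>y\<in>UNIV. \<bar>dd x0 (Suc n) t y\<bar>) = (\<Sum>y\<in>UNIV. \<bar>LINT s:{0..t}|lborel. Gf q (dd x0 n) s y\<bar>)"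
    using Suc.prems by (simp add: dd_Suc)
  also have "\<dots> \<le> CC * (LINT s:{0..t}|lborel. \<Sum>x\<in>UNIV. \<bar>dd x0 n s x\<bar>)"
    by (rule Gsum[OF dd_cont Suc.prems])
  also have "\<dots> \<le> 1 * (CC * t) ^ Suc (Suc n) / fact (Suc (Suc n))"
    by (rule pow_step[OF Suc.prems CC0 sumabs_int[OF dd_cont]]) (use Suc.IH in auto)
  finally show ?case .
qed

definition MM where "MM T k = (CC * T) ^ Suc k / fact (Suc k)"

lemma MM_summable: "summable (MM T)"
proof -
  have "summable (\<lambda>n. (CC * T) ^ n /\<^sub>R fact n)" by (rule summable_exp_generic)
  then have "summable (\<lambda>n. (CC * T) ^ n / fact n)" by (simp add: divide_inverse_commute)
  then show ?thesis unfolding MM_def by (subst summable_Suc_iff)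
qed

lemma MM_nonneg: "0 \<le> T \<Longrightarrow> 0 \<le> MM T k" unfolding MM_def using CC0 by simp

lemma dd_le:
  assumes T: "0 \<le> T" and tT: "t \<le> T"
  shows "\<bar>dd x0 k t y\<bar> \<le> MM T k"
proof (cases "t < 0")
  case True then show ?thesis using dd_neg MM_nonneg[OF T] by simp
next
  case False
  then have t: "0 \<le> t" by simp
  have "\<bar>dd x0 k t y\<bar> \<le> (\<Sum>y\<in>UNIV. \<bar>dd x0 k t y\<bar>)" by (rule member_le_sum) auto
  also have "\<dots> \<le> (CC * t) ^ Suc k / fact (Suc k)" using dd_bound[OF t] by simp
  also have "\<dots> \<le> MM T k" unfolding MM_def
    by (intro divide_right_mono power_mono mult_left_mono) (use CC0 t tT in auto)
  finally show ?thesis .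
qed

lemma pic_tele: "pic x0 n t y = pic x0 0 t y + (\<Sum>k<n. dd x0 k t y)"
  unfolding dd_def using sum_lessThan_telescope[of "\<lambda>n. pic x0 n t y" n] by simp

definition plim where "plim x0 t y = pic x0 0 t y + (\<Sum>k. dd x0 k t y)"

lemma dd_summable: "summable (\<lambda>k. dd x0 k t y)"
  by (rule summable_comparison_test'[OF MM_summable[of "max 0 t"]]) (auto intro: dd_le)

lemma pic_lim: "(\<lambda>n. pic x0 n t y) \<longlonglongrightarrow> plim x0 t y"
proof -
  have "(\<lambda>n. pic x0 0 t y + (\<Sum>k<n. dd x0 k t y)) \<longlonglongrightarrow> plim x0 t y"
    unfolding plim_def by (intro tendsto_intros summable_LIMSEQ dd_summable)
  then show ?thesis unfolding pic_tele[symmetric] .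
qed

lemma plim_cont: "continuous_on UNIV (\<lambda>t. plim x0 t y)"
proof (rule cont_all)
  fix T :: real assume T: "0 \<le> T"
  have ul: "uniform_limit {..T} (\<lambda>n t. \<Sum>k<n. dd x0 k t y) (\<lambda>t. \<Sum>k. dd x0 k t y) sequentially"
    by (rule Weierstrass_m_test[OF _ MM_summable]) (use dd_le T in auto)
  have "continuous_on {..T} (\<lambda>t. \<Sum>k. dd x0 k t y)"
    by (rule uniform_limit_theorem[OF _ ul])
       (auto intro!: always_eventually continuous_on_sum continuous_on_subset[OF dd_cont])
  then show "continuous_on {..T} (\<lambda>t. plim x0 t y)" unfolding plim_def by (auto intro!: continuous_intros)
qed

lemma pic_ub:
  assumes T: "0 \<le> T" and tT: "t \<le> T"
  shows "\<bar>pic x0 n t y\<bar> \<le> 1 + suminf (MM T)"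
proof -
  have "\<bar>pic x0 n t y\<bar> \<le> \<bar>pic x0 0 t y\<bar> + (\<Sum>k<n. \<bar>dd x0 k t y\<bar>)"
  proof -
    have e: "pic x0 n t y = pic x0 0 t y + (\<Sum>k<n. dd x0 k t y)" by (rule pic_tele)
    show ?thesis unfolding e by (rule order_trans[OF abs_triangle_ineq add_left_mono[OF sum_abs]])
  qed
  also have "\<dots> \<le> 1 + (\<Sum>k<n. MM T k)"
    by (intro add_mono sum_mono dd_le T tT) auto
  also have "\<dots> \<le> 1 + suminf (MM T)"
    by (intro add_left_mono sum_le_suminf MM_summable MM_nonneg T) auto
  finally show ?thesis .
qed

lemma exists_fw: "fw q x0 (plim x0)"
proof -
  have pc: "\<And>x. continuous_on UNIV (\<lambda>t. plim x0 t x)" by (rule plim_cont)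
  have "plim x0 t y = (if y = x0 then 1 else 0) + (LINT s:{0..t}|lborel. Gf q (plim x0) s y)"
    if t: "0 \<le> t" for t y
  proof -
    define Bd where "Bd = K * (CARD('s) + 1) * (CARD('s) * (1 + suminf (MM t)))"
    have lim1: "(\<lambda>n. LINT s:{0..t}|lborel. Gf q (pic x0 n) s y) \<longlonglongrightarrow> (LINT s:{0..t}|lborel. Gf q (plim x0) s y)"
      unfolding set_lebesgue_integral_def
    proof (rule integral_dominated_convergence[where w="\<lambda>s. indicator {0..t} s * Bd"])
      show "(\<lambda>s. indicat_real {0..t} s *\<^sub>R Gf q (plim x0) s y) \<in> borel_measurable lborel"
        using Gm[of "plim x0" y] cont_meas[OF pc] by simp
      show "(\<lambda>s. indicat_real {0..t} s *\<^sub>R Gf q (pic x0 n) s y) \<in> borel_measurable lborel" for n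
        using Gm[of "pic x0 n" y] cont_meas[OF pic_cont] by simp
      show "integrable lborel (\<lambda>s. indicat_real {0..t} s * Bd)"
        using integrable_mult_indicator[of "{0..t}" lborel "\<lambda>_. Bd"] by (simp add: emeasure_lborel_Icc_eq)
      show "AE s in lborel. (\<lambda>n. indicat_real {0..t} s *\<^sub>R Gf q (pic x0 n) s y) \<longlonglongrightarrow> indicat_real {0..t} s *\<^sub>R Gf q (plim x0) s y"
        unfolding Gf_def by (intro AE_I2 tendsto_intros pic_lim)
      show "AE s in lborel. norm (indicat_real {0..t} s *\<^sub>R Gf q (pic x0 n) s y) \<le> indicat_real {0..t} s * Bd" for n
      proof (rule AE_I2)
        fix s
        show "norm (indicat_real {0..t} s *\<^sub>R Gf q (pic x0 n) s y) \<le> indicat_real {0..t} s * Bd"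
        proof (cases "s \<in> {0..t}")
          case False then show ?thesis by simp
        next
          case True
          have "(\<Sum>x\<in>UNIV. \<bar>pic x0 n s x\<bar>) \<le> (\<Sum>x\<in>(UNIV::'s set). 1 + suminf (MM t))"
            by (rule sum_mono, rule pic_ub) (use True in auto)
          then have "(\<Sum>x\<in>UNIV. \<bar>pic x0 n s x\<bar>) \<le> CARD('s) * (1 + suminf (MM t))" by simp
          then have "\<bar>Gf q (pic x0 n) s y\<bar> \<le> Bd" unfolding Bd_def
            by (rule order_trans[OF Gb mult_left_mono]) (use K0 in auto)
          then show ?thesis using True by simp
        qed
      qed
    qed
    have lim2: "(\<lambda>n. pic x0 (Suc n) t y) \<longlonglongrightarrow> (if y = x0 then 1 else 0) + (LINT s:{0..t}|lborel. Gf q (plim x0) s y)"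
      by (simp only: pic.simps) (intro tendsto_intros lim1)
    have lim3: "(\<lambda>n. pic x0 (Suc n) t y) \<longlonglongrightarrow> plim x0 t y"
      using pic_lim LIMSEQ_Suc by blast
    show ?thesis using LIMSEQ_unique[OF lim3 lim2] .
  qed
  then show ?thesis unfolding fw_def using pc by blast
qed

end


definition aR :: "('v \<Rightarrow> 'v \<Rightarrow> bool) \<Rightarrow> real \<Rightarrow> (real \<Rightarrow> 'v \<Rightarrow> real) \<Rightarrow> real \<Rightarrow> 'v set \<Rightarrow> 'v \<Rightarrow> real" where
  "aR E \<beta> L t y j = (if y \<noteq> {} \<and> j \<notin> y then \<beta> * real (card {i\<in>y. E i j}) + L t j else 0)"
definition bR :: "('v \<Rightarrow> 'v \<Rightarrow> bool) \<Rightarrow> real \<Rightarrow> (real \<Rightarrow> 'v \<Rightarrow> real) \<Rightarrow> real \<Rightarrow> ('v \<Rightarrow> sir) \<Rightarrow> 'v \<Rightarrow> real" where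
  "bR E \<beta> L t x j = (if (\<exists>v. x v = I_inf) \<and> x j = S_sus then \<beta> * real (card {i. E i j \<and> x i = I_inf}) + L t j else 0)"
definition rA :: "'v set \<Rightarrow> 'v \<Rightarrow> real" where
  "rA y j = (if y \<noteq> {} \<and> j \<in> y then 1 else 0)"
definition rB :: "('v \<Rightarrow> sir) \<Rightarrow> 'v \<Rightarrow> real" where
  "rB x j = (if (\<exists>v. x v = I_inf) \<and> x j = I_inf then 1 else 0)"
definition mv :: "'a \<Rightarrow> 'a \<Rightarrow> real \<Rightarrow> real" where
  "mv tg s' r = (if s' = tg then r else 0)"

definition Qj :: "('v \<Rightarrow> 'v \<Rightarrow> bool) \<Rightarrow> real \<Rightarrow> (real \<Rightarrow> 'v \<Rightarrow> real) \<Rightarrow> real \<Rightarrow> ('v set \<times> ('v \<Rightarrow> sir)) \<Rightarrow> 'v \<Rightarrow> ('v set \<times> ('v \<Rightarrow> sir)) \<Rightarrow> real" where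
  "Qj E \<beta> L t s j s' =
     mv (insert j (fst s), (snd s)(j:=I_inf)) s' (min (aR E \<beta> L t (fst s) j) (bR E \<beta> L t (snd s) j))
   + mv (insert j (fst s), snd s) s' (aR E \<beta> L t (fst s) j - min (aR E \<beta> L t (fst s) j) (bR E \<beta> L t (snd s) j))
   + mv (fst s, (snd s)(j:=I_inf)) s' (bR E \<beta> L t (snd s) j - min (aR E \<beta> L t (fst s) j) (bR E \<beta> L t (snd s) j))
   + mv (fst s - {j}, (snd s)(j:=R_res)) s' (min (rA (fst s) j) (rB (snd s) j))
   + mv (fst s - {j}, snd s) s' (rA (fst s) j - min (rA (fst s) j) (rB (snd s) j))
   + mv (fst s, (snd s)(j:=R_res)) s' (rB (snd s) j - min (rA (fst s) j) (rB (snd s) j))"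

definition Qc :: "('v::finite \<Rightarrow> 'v \<Rightarrow> bool) \<Rightarrow> real \<Rightarrow> (real \<Rightarrow> 'v \<Rightarrow> real) \<Rightarrow> real \<Rightarrow> ('v set \<times> ('v \<Rightarrow> sir)) \<Rightarrow> ('v set \<times> ('v \<Rightarrow> sir)) \<Rightarrow> real" where
  "Qc E \<beta> L t s s' = (\<Sum>j\<in>UNIV. Qj E \<beta> L t s j s')"

lemma fmv: "(\<Sum>s'\<in>{s'. f s' = u}. mv tg s' r) = (if f tg = u then r else 0)"
  for f :: "'a::finite \<Rightarrow> 'b"
  unfolding mv_def by (simp add: sum.delta)

lemma sum_ifr: "(\<Sum>j\<in>UNIV. if P j then f j else 0) = (\<Sum>j\<in>{j. P j}. f j)"
  for f :: "'a::finite \<Rightarrow> real"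
  using sum.inter_filter[of UNIV f P] by simp

lemma fiber_fst:
  fixes E :: "'v::finite \<Rightarrow> 'v \<Rightarrow> bool"
  assumes u: "u \<noteq> fst s"
  shows "(\<Sum>s'\<in>{s'. fst s' = u}. Qc E \<beta> L t s s') = sis_rate E \<beta> L t (fst s) u"
proof -
  obtain y x where s: "s = (y, x)" by force
  have "(\<Sum>s'\<in>{s'. fst s' = u}. Qc E \<beta> L t s s') = (\<Sum>j\<in>UNIV. \<Sum>s'\<in>{s'. fst s' = u}. Qj E \<beta> L t s j s')"
    unfolding Qc_def by (rule sum.swap)
  also have "\<dots> = (\<Sum>j\<in>UNIV. (if insert j y = u then aR E \<beta> L t y j else 0) + (if y - {j} = u then rA y j else 0))"
    by (rule sum.cong) (use u in \<open>auto simp: Qj_def sum.distrib fmv s\<close>)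
  also have "\<dots> = sis_rate E \<beta> L t y u"
  proof (cases "y = {}")
    case True then show ?thesis by (auto intro!: sum.neutral simp: sis_rate_def aR_def rA_def)
  next
    case False
    have "(\<Sum>j\<in>UNIV. (if insert j y = u then aR E \<beta> L t y j else 0) + (if y - {j} = u then rA y j else 0))
      = (\<Sum>j\<in>UNIV. (if j \<in> -y then (if u = insert j y then \<beta> * real (card {i\<in>y. E i j}) + L t j else 0) else 0))
      + (\<Sum>j\<in>UNIV. (if j \<in> y then (if u = y - {j} then 1 else 0) else 0))"
      unfolding sum.distrib[symmetric] by (rule sum.cong) (use False in \<open>auto simp: aR_def rA_def\<close>)
    also have "\<dots> = sis_rate E \<beta> L t y u"
    proof -
      have "-y = {j. j \<notin> y}" "y = {j. j \<in> y}" by auto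
      then show ?thesis unfolding sis_rate_def using False by (simp only: sum_ifr) simp
    qed
    finally show ?thesis .
  qed
  finally show ?thesis by (simp add: s)
qed

lemma fiber_snd:
  fixes E :: "'v::finite \<Rightarrow> 'v \<Rightarrow> bool"
  assumes u: "u \<noteq> snd s"
  shows "(\<Sum>s'\<in>{s'. snd s' = u}. Qc E \<beta> L t s s') = sir_rate E \<beta> L t (snd s) u"
proof -
  obtain y x where s: "s = (y, x)" by force
  have "(\<Sum>s'\<in>{s'. snd s' = u}. Qc E \<beta> L t s s') = (\<Sum>j\<in>UNIV. \<Sum>s'\<in>{s'. snd s' = u}. Qj E \<beta> L t s j s')"
    unfolding Qc_def by (rule sum.swap)
  also have "\<dots> = (\<Sum>j\<in>UNIV. (if x(j:=I_inf) = u then bR E \<beta> L t x j else 0) + (if x(j:=R_res) = u then rB x j else 0))"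
    by (rule sum.cong) (use u in \<open>auto simp: Qj_def sum.distrib fmv s\<close>)
  also have "\<dots> = sir_rate E \<beta> L t x u"
  proof (cases "\<forall>v. x v \<noteq> I_inf")
    case True then show ?thesis by (auto intro!: sum.neutral simp: sir_rate_def bR_def rB_def)
  next
    case False
    have "(\<Sum>j\<in>UNIV. (if x(j:=I_inf) = u then bR E \<beta> L t x j else 0) + (if x(j:=R_res) = u then rB x j else 0))
      = (\<Sum>j\<in>UNIV. (if j \<in> {j. x j = S_sus} then (if u = x(j := I_inf) then \<beta> * real (card {i. E i j \<and> x i = I_inf}) + L t j else 0) else 0))
      + (\<Sum>j\<in>UNIV. (if j \<in> {j. x j = I_inf} then (if u = x(j := R_res) then 1 else 0) else 0))"
      unfolding sum.distrib[symmetric] by (rule sum.cong) (use False in \<open>auto simp: bR_def rB_def\<close>)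
    also have "\<dots> = sir_rate E \<beta> L t x u"
      unfolding sir_rate_def using False by (simp only: sum_ifr) simp
    finally show ?thesis .
  qed
  finally show ?thesis by (simp add: s)
qed


lemma m0_lemma:
  fixes L :: "real \<Rightarrow> 'v \<Rightarrow> real"
  assumes "\<forall>t j. 0 \<le> L t j" "\<forall>t j. L t j \<le> \<mu>" "0 \<le> \<beta>"
  shows "0 \<le> \<beta> * real n + \<mu>"
proof -
  have "0 \<le> L 0 undefined" "L 0 undefined \<le> \<mu>" using assms by auto
  moreover have "0 \<le> \<beta> * real n" using assms by simp
  ultimately show ?thesis by linarith
qed

lemma card_le_CARD: "real (card (S::'v::finite set)) \<le> real CARD('v)"
  by (simp add: card_mono)

lemma aR_bounds:
  fixes E :: "'v::finite \<Rightarrow> 'v \<Rightarrow> bool" and \<beta> \<mu> :: real and L :: "real \<Rightarrow> 'v \<Rightarrow> real"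
  assumes b: "0 \<le> \<beta>" and Ln: "\<forall>t j. 0 \<le> L t j" and Lm: "\<forall>t j. L t j \<le> \<mu>"
  shows "0 \<le> aR E \<beta> L t y j" "aR E \<beta> L t y j \<le> \<beta> * CARD('v::finite) + \<mu>"
proof -
  have m0: "0 \<le> \<beta> * CARD('v) + \<mu>" by (rule m0_lemma[OF Ln Lm b])
  have Lt: "L t j \<le> \<mu>" "0 \<le> L t j" using Ln Lm by auto
  have "\<beta> * real (card {i\<in>y. E i j}) \<le> \<beta> * CARD('v)" by (intro mult_left_mono) (auto simp: card_mono b)
  then show "0 \<le> aR E \<beta> L t y j" "aR E \<beta> L t y j \<le> \<beta> * CARD('v::finite) + \<mu>"
    using Lt m0 b by (auto simp: aR_def intro: add_mono mult_nonneg_nonneg)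
qed

lemma bR_bounds:
  fixes E :: "'v::finite \<Rightarrow> 'v \<Rightarrow> bool" and \<beta> \<mu> :: real and L :: "real \<Rightarrow> 'v \<Rightarrow> real"
  assumes b: "0 \<le> \<beta>" and Ln: "\<forall>t j. 0 \<le> L t j" and Lm: "\<forall>t j. L t j \<le> \<mu>"
  shows "0 \<le> bR E \<beta> L t x j" "bR E \<beta> L t x j \<le> \<beta> * CARD('v::finite) + \<mu>"
proof -
  have m0: "0 \<le> \<beta> * CARD('v) + \<mu>" by (rule m0_lemma[OF Ln Lm b])
  have Lt: "L t j \<le> \<mu>" "0 \<le> L t j" using Ln Lm by auto
  have "\<beta> * real (card {i. E i j \<and> x i = I_inf}) \<le> \<beta> * CARD('v)" by (intro mult_left_mono) (auto simp: card_mono b)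
  then show "0 \<le> bR E \<beta> L t x j" "bR E \<beta> L t x j \<le> \<beta> * CARD('v::finite) + \<mu>"
    using Lt m0 b by (auto simp: bR_def intro: add_mono mult_nonneg_nonneg)
qed

lemma mv_nonneg: "0 \<le> r \<Longrightarrow> 0 \<le> mv tg s r" by (simp add: mv_def)
lemma mv_le: "0 \<le> r \<Longrightarrow> mv tg s r \<le> r" by (simp add: mv_def)

lemma Qj_bounds:
  fixes E :: "'v::finite \<Rightarrow> 'v \<Rightarrow> bool" and \<beta> \<mu> :: real and L :: "real \<Rightarrow> 'v \<Rightarrow> real"
  assumes b: "0 \<le> \<beta>" and Ln: "\<forall>t j. 0 \<le> L t j" and Lm: "\<forall>t j. L t j \<le> \<mu>"
  shows "0 \<le> Qj E \<beta> L t s j s'" "Qj E \<beta> L t s j s' \<le> 2 * (\<beta> * CARD('v::finite) + \<mu>) + 2"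
proof -
  let ?a = "aR E \<beta> L t (fst s) j" and ?b = "bR E \<beta> L t (snd s) j"
  let ?ra = "rA (fst s) j" and ?rb = "rB (snd s) j"
  have a: "0 \<le> ?a" "?a \<le> \<beta> * CARD('v) + \<mu>" by (rule aR_bounds[OF b Ln Lm])+
  have bb: "0 \<le> ?b" "?b \<le> \<beta> * CARD('v) + \<mu>" by (rule bR_bounds[OF b Ln Lm])+
  have r: "0 \<le> ?ra" "?ra \<le> 1" "0 \<le> ?rb" "?rb \<le> 1" by (auto simp: rA_def rB_def)
  show "0 \<le> Qj E \<beta> L t s j s'" unfolding Qj_def
    using a bb r by (intro add_nonneg_nonneg mv_nonneg) auto
  have "Qj E \<beta> L t s j s' \<le> min ?a ?b + (?a - min ?a ?b) + (?b - min ?a ?b) + min ?ra ?rb + (?ra - min ?ra ?rb) + (?rb - min ?ra ?rb)"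
    unfolding Qj_def using a bb r by (intro add_mono mv_le) auto
  also have "\<dots> \<le> 2 * (\<beta> * CARD('v::finite) + \<mu>) + 2" using a bb r by auto
  finally show "Qj E \<beta> L t s j s' \<le> 2 * (\<beta> * CARD('v::finite) + \<mu>) + 2" .
qed

lemma Qc_bounds:
  fixes E :: "'v::finite \<Rightarrow> 'v \<Rightarrow> bool" and \<beta> \<mu> :: real and L :: "real \<Rightarrow> 'v \<Rightarrow> real"
  assumes b: "0 \<le> \<beta>" and Ln: "\<forall>t j. 0 \<le> L t j" and Lm: "\<forall>t j. L t j \<le> \<mu>"
  shows "0 \<le> Qc E \<beta> L t s s'" "\<bar>Qc E \<beta> L t s s'\<bar> \<le> CARD('v::finite) * (2 * (\<beta> * CARD('v) + \<mu>) + 2)"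
proof -
  show n: "0 \<le> Qc E \<beta> L t s s'" unfolding Qc_def by (intro sum_nonneg Qj_bounds[OF b Ln Lm])
  have "Qc E \<beta> L t s s' \<le> (\<Sum>j\<in>(UNIV::'v set). 2 * (\<beta> * CARD('v::finite) + \<mu>) + 2)"
    unfolding Qc_def by (intro sum_mono Qj_bounds[OF b Ln Lm])
  then show "\<bar>Qc E \<beta> L t s s'\<bar> \<le> CARD('v::finite) * (2 * (\<beta> * CARD('v) + \<mu>) + 2)" using n by simp
qed

lemma Qc_meas:
  assumes [measurable]: "\<And>j. (\<lambda>t. L t j) \<in> borel_measurable borel"
  shows "(\<lambda>t. Qc E \<beta> L t s s') \<in> borel_measurable borel"
  unfolding Qc_def Qj_def mv_def aR_def bR_def by measurable

lemma sis_meas: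
  assumes [measurable]: "\<And>j. (\<lambda>t. L t j) \<in> borel_measurable borel"
  shows "(\<lambda>t. sis_rate E \<beta> L t x y) \<in> borel_measurable borel"
  unfolding sis_rate_def by measurable

lemma sir_meas:
  assumes [measurable]: "\<And>j. (\<lambda>t. L t j) \<in> borel_measurable borel"
  shows "(\<lambda>t. sir_rate E \<beta> L t x y) \<in> borel_measurable borel"
  unfolding sir_rate_def by measurable

lemma sis_bound:
  fixes E :: "'v::finite \<Rightarrow> 'v \<Rightarrow> bool" and \<beta> \<mu> :: real and L :: "real \<Rightarrow> 'v \<Rightarrow> real"
  assumes b: "0 \<le> \<beta>" and Ln: "\<forall>t j. 0 \<le> L t j" and Lm: "\<forall>t j. L t j \<le> \<mu>"
  shows "\<bar>sis_rate E \<beta> L t x y\<bar> \<le> CARD('v) * (\<beta> * CARD('v) + \<mu>) + CARD('v)"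
proof -
  let ?f = "\<lambda>j. if y = insert j x then \<beta> * real (card {i\<in>x. E i j}) + L t j else 0"
  let ?g = "\<lambda>j. if y = x - {j} then 1 else (0::real)"
  have f: "0 \<le> ?f j" "?f j \<le> \<beta> * CARD('v) + \<mu>" for j
  proof -
    have "\<beta> * real (card {i\<in>x. E i j}) \<le> \<beta> * CARD('v)" by (intro mult_left_mono) (auto simp: card_mono b)
    moreover have m0: "0 \<le> \<beta> * CARD('v) + \<mu>" by (rule m0_lemma[OF Ln Lm b])
    moreover have Lt: "L t j \<le> \<mu>" "0 \<le> L t j" using Ln Lm by auto
    ultimately show "0 \<le> ?f j" "?f j \<le> \<beta> * CARD('v) + \<mu>" using b by (simp_all add: add_mono)
  qed
  have "sum ?f (-x) \<le> card (-x) * (\<beta> * CARD('v) + \<mu>)" by (rule sum_bounded_above) (use f in auto)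
  also have "\<dots> \<le> CARD('v) * (\<beta> * CARD('v) + \<mu>)"
    by (rule mult_right_mono[OF card_le_CARD]) (use f(1)[of undefined] f(2)[of undefined] in linarith)
  finally have 1: "sum ?f (-x) \<le> CARD('v) * (\<beta> * CARD('v) + \<mu>)" .
  have "sum ?g x \<le> real (card x) * 1" by (rule sum_bounded_above) auto
  then have 2: "sum ?g x \<le> CARD('v)" using card_le_CARD[of x] by simp
  have 3: "0 \<le> sum ?f (-x)" "0 \<le> sum ?g x" by (auto intro: sum_nonneg simp: f)
  show ?thesis unfolding sis_rate_def using 1 2 3 by auto
qed

lemma sir_bound:
  fixes E :: "'v::finite \<Rightarrow> 'v \<Rightarrow> bool" and \<beta> \<mu> :: real and L :: "real \<Rightarrow> 'v \<Rightarrow> real"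
  assumes b: "0 \<le> \<beta>" and Ln: "\<forall>t j. 0 \<le> L t j" and Lm: "\<forall>t j. L t j \<le> \<mu>"
  shows "\<bar>sir_rate E \<beta> L t x y\<bar> \<le> CARD('v) * (\<beta> * CARD('v) + \<mu>) + CARD('v)"
proof -
  let ?f = "\<lambda>j. if y = x(j := I_inf) then \<beta> * real (card {i. E i j \<and> x i = I_inf}) + L t j else 0"
  let ?g = "\<lambda>j. if y = x(j := R_res) then 1 else (0::real)"
  have f: "0 \<le> ?f j" "?f j \<le> \<beta> * CARD('v) + \<mu>" for j
  proof -
    have "\<beta> * real (card {i. E i j \<and> x i = I_inf}) \<le> \<beta> * CARD('v)" by (intro mult_left_mono) (auto simp: card_mono b)
    moreover have m0: "0 \<le> \<beta> * CARD('v) + \<mu>" by (rule m0_lemma[OF Ln Lm b])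
    moreover have Lt: "L t j \<le> \<mu>" "0 \<le> L t j" using Ln Lm by auto
    ultimately show "0 \<le> ?f j" "?f j \<le> \<beta> * CARD('v) + \<mu>" using b by (simp_all add: add_mono)
  qed
  have "sum ?f {j. x j = S_sus} \<le> card {j. x j = S_sus} * (\<beta> * CARD('v) + \<mu>)" by (rule sum_bounded_above) (use f in auto)
  also have "\<dots> \<le> CARD('v) * (\<beta> * CARD('v) + \<mu>)"
    by (rule mult_right_mono[OF card_le_CARD]) (use f(1)[of undefined] f(2)[of undefined] in linarith)
  finally have 1: "sum ?f {j. x j = S_sus} \<le> CARD('v) * (\<beta> * CARD('v) + \<mu>)" .
  have "sum ?g {j. x j = I_inf} \<le> real (card {j. x j = I_inf}) * 1" by (rule sum_bounded_above) auto
  then have 2: "sum ?g {j. x j = I_inf} \<le> CARD('v)" using card_le_CARD[of "{j. x j = I_inf}"] by simp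
  have 3: "0 \<le> sum ?f {j. x j = S_sus}" "0 \<le> sum ?g {j. x j = I_inf}" by (auto intro: sum_nonneg simp: f)
  show ?thesis unfolding sir_rate_def using 1 2 3 by auto
qed

definition good :: "'v set \<times> ('v \<Rightarrow> sir) \<Rightarrow> bool" where
  "good s \<longleftrightarrow> {v. snd s v = I_inf} \<subseteq> fst s"

lemma Qc_good:
  fixes E :: "'v::finite \<Rightarrow> 'v \<Rightarrow> bool"
  assumes b: "0 \<le> \<beta>" and gs: "good s" and bs': "\<not> good s'" and Ln: "\<forall>t j. 0 \<le> L t j"
  shows "Qc E \<beta> L t s s' = 0"
  unfolding Qc_def
proof (rule sum.neutral, intro ballI)
  fix j
  obtain y x where s: "s = (y, x)" by force
  have g: "{v. x v = I_inf} \<subseteq> y" using gs by (simp add: good_def s)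
  let ?a = "aR E \<beta> L t y j" and ?b = "bR E \<beta> L t x j"
  have T1: "mv (insert j y, x(j:=I_inf)) s' r = 0" for r
    using bs' g by (auto simp: mv_def good_def split: if_splits)
  have T2: "mv (insert j y, x) s' r = 0" for r
    using bs' g by (auto simp: mv_def good_def split: if_splits)
  have T3: "mv (y, x(j:=I_inf)) s' (?b - min ?a ?b) = 0"
  proof (cases "j \<in> y")
    case True
    have "s' \<noteq> (y, x(j:=I_inf))" using bs' g True by (auto simp: good_def split: if_splits)
    then show ?thesis by (simp add: mv_def)
  next
    case False
    have "?b \<le> ?a"
    proof (cases "(\<exists>v. x v = I_inf) \<and> x j = S_sus")
      case True
      then have "y \<noteq> {}" using g by auto
      have "card {i. E i j \<and> x i = I_inf} \<le> card {i\<in>y. E i j}"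
        by (rule card_mono) (use g in auto)
      then have "\<beta> * real (card {i. E i j \<and> x i = I_inf}) \<le> \<beta> * real (card {i\<in>y. E i j})"
        by (intro mult_left_mono b) simp
      then show ?thesis using True False \<open>y \<noteq> {}\<close> by (simp add: aR_def bR_def)
    next
      case False
      then have "?b = 0" unfolding bR_def by auto
      moreover have "0 \<le> ?a" using Ln b by (simp add: aR_def)
      ultimately show ?thesis by simp
    qed
    then show ?thesis by (simp add: mv_def)
  qed
  have T4: "mv (y - {j}, x(j:=R_res)) s' r = 0" for r
    using bs' g by (auto simp: mv_def good_def split: if_splits)
  have T5: "mv (y - {j}, x) s' (rA y j - min (rA y j) (rB x j)) = 0"
  proof (cases "x j = I_inf")
    case True then have "j \<in> y" using g by auto
    then show ?thesis using True by (auto simp: mv_def rA_def rB_def)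
  next
    case False then show ?thesis using bs' g by (auto simp: mv_def good_def split: if_splits)
  qed
  have T6: "mv (y, x(j:=R_res)) s' r = 0" for r
    using bs' g by (auto simp: mv_def good_def split: if_splits)
  show "Qj E \<beta> L t s j s' = 0" unfolding Qj_def s fst_conv snd_conv T1 T2 T3 T4 T5 T6 by simp
qed


lemma fiber_sum:
  fixes h :: "'s::finite \<Rightarrow> real" and g :: "'s \<Rightarrow> 't::finite"
  shows "(\<Sum>y\<in>{y. Q y}. \<Sum>s\<in>{s. g s = y}. h s) = (\<Sum>s\<in>{s. Q (g s)}. h s)"
proof -
  have "(\<Sum>y\<in>{y. Q y}. \<Sum>s\<in>{s. g s = y}. h s) = (\<Sum>y\<in>{y. Q y}. \<Sum>s\<in>{s\<in>{s. Q (g s)}. g s = y}. h s)"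
    by (rule sum.cong) (auto intro!: sum.cong)
  also have "\<dots> = (\<Sum>s\<in>{s. Q (g s)}. h s)" by (rule sum.group) auto
  finally show ?thesis .
qed

theorem lemma4:
  fixes E :: "'v::finite \<Rightarrow> 'v \<Rightarrow> bool"
    and \<beta> \<mu> :: real
    and L :: "real \<Rightarrow> 'v \<Rightarrow> real"
    and A :: "'v set"
    and pSIS :: "real \<Rightarrow> 'v set \<Rightarrow> real"
    and pSIR :: "real \<Rightarrow> ('v \<Rightarrow> sir) \<Rightarrow> real"
  assumes sym: "\<forall>i j. E i j \<longleftrightarrow> E j i"
    and irrefl: "\<forall>i. \<not> E i i"
    and beta: "\<beta> > 0"
    and L_nonneg: "\<forall>t j. L t j \<ge> 0"
    and L_virulence: "\<forall>t. (\<Sum>j\<in>UNIV. L t j) \<le> \<mu>"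
    and L_meas: "\<forall>j. (\<lambda>t. L t j) \<in> borel_measurable borel"
    and SIS: "forward_law (sis_rate E \<beta> L) A pSIS"
    and SIR: "forward_law (sir_rate E \<beta> L) (\<lambda>v. if v \<in> A then I_inf else S_sus) pSIR"
  shows "\<forall>r. sis_surv pSIS r \<ge> sir_surv pSIR r"
proof
  fix r :: real
  show "sis_surv pSIS r \<ge> sir_surv pSIR r"
  proof (cases "r < 0")
    case True then show ?thesis by (simp add: sis_surv_def sir_surv_def)
  next
    case False
    then have r: "0 \<le> r" by simp
    have b0: "0 \<le> \<beta>" using beta by simp
    have Lm: "\<forall>t j. L t j \<le> \<mu>"
    proof (intro allI)
      fix t j
      have "L t j \<le> (\<Sum>j\<in>UNIV. L t j)" by (rule member_le_sum) (use L_nonneg in auto)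
      then show "L t j \<le> \<mu>" using L_virulence by (meson order_trans)
    qed
    have Lmeas: "\<And>j. (\<lambda>t. L t j) \<in> borel_measurable borel" using L_meas by auto
    interpret Q: rt "Qc E \<beta> L" "CARD('v) * (2 * (\<beta> * CARD('v) + \<mu>) + 2)"
      by unfold_locales (rule Qc_meas[OF Lmeas], rule Qc_bounds(2)[OF b0 L_nonneg Lm])
    interpret S: rt "sis_rate E \<beta> L" "CARD('v) * (\<beta> * CARD('v) + \<mu>) + CARD('v)"
      by unfold_locales (rule sis_meas[OF Lmeas], rule sis_bound[OF b0 L_nonneg Lm])
    interpret R: rt "sir_rate E \<beta> L" "CARD('v) * (\<beta> * CARD('v) + \<mu>) + CARD('v)"
      by unfold_locales (rule sir_meas[OF Lmeas], rule sir_bound[OF b0 L_nonneg Lm])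
    define x0 where "x0 = (\<lambda>v. if v \<in> A then I_inf else S_sus)"
    define s0 where "s0 = (A, x0)"
    define P where "P = Q.plim s0"
    have fP: "fw (Qc E \<beta> L) s0 P" unfolding P_def by (rule Q.exists_fw)
    have f1: "fw (sis_rate E \<beta> L) (fst s0) (\<lambda>t u. \<Sum>s\<in>{s. fst s = u}. P t s)"
      by (rule Q.lump[OF fP]) (rule fiber_fst)
    have f2: "fw (sir_rate E \<beta> L) (snd s0) (\<lambda>t u. \<Sum>s\<in>{s. snd s = u}. P t s)"
      by (rule Q.lump[OF fP]) (rule fiber_snd)
    have g1: "fw (sis_rate E \<beta> L) (fst s0) (\<lambda>t. pSIS (max 0 t))"
      using forward_fw[OF SIS] by (simp add: s0_def)
    have g2: "fw (sir_rate E \<beta> L) (snd s0) (\<lambda>t. pSIR (max 0 t))"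
      using forward_fw[OF SIR] by (simp add: s0_def x0_def)
    have e1: "pSIS r u = (\<Sum>s\<in>{s. fst s = u}. P r s)" for u
      using S.uniq[OF g1 f1 r, of u] r by simp
    have e2: "pSIR r u = (\<Sum>s\<in>{s. snd s = u}. P r s)" for u
      using R.uniq[OF g2 f2 r, of u] r by simp
    have Pc: "\<And>x. continuous_on UNIV (\<lambda>t. P t x)" using fP unfolding fw_def by auto
    have gs0: "good s0" by (auto simp: good_def s0_def x0_def)
    have bad0: "P r s = 0" if "\<not> good s" for s
    proof (rule Q.Zl[OF Pc, where B="{s. \<not> good s}"])
      fix t and y :: "'v set \<times> ('v \<Rightarrow> sir)" assume t: "0 \<le> (t::real)" and y: "y \<in> {s. \<not> good s}"
      then have "y \<noteq> s0" using gs0 by auto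
      then show "P t y = (LINT s:{0..t}|lborel. Gf (Qc E \<beta> L) P s y)"
      proof -
        have "P t y = (if y = s0 then 1 else 0) + (LINT s:{0..t}|lborel. Gf (Qc E \<beta> L) P s y)"
          using fP t unfolding fw_def by blast
        then show ?thesis using \<open>y \<noteq> s0\<close> by simp
      qed
    next
      fix t and x y :: "'v set \<times> ('v \<Rightarrow> sir)" assume "x \<notin> {s. \<not> good s}" "y \<in> {s. \<not> good s}"
      then show "Qc E \<beta> L t x y = 0" using Qc_good[OF b0 _ _ L_nonneg] by auto
    qed (use r that in auto)
    have Pn: "0 \<le> P r s" for s by (rule Q.pos[OF fP Qc_bounds(1)[OF b0 L_nonneg Lm] r])
    have "sir_surv pSIR r = (\<Sum>s\<in>{s. \<exists>v. snd s v = I_inf}. P r s)"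
      using False by (simp add: sir_surv_def e2 fiber_sum[where Q="\<lambda>y. \<exists>v. y v = I_inf"])
    also have "\<dots> = (\<Sum>s\<in>{s. \<exists>v. snd s v = I_inf} \<inter> {s. fst s \<noteq> {}}. P r s)"
    proof (rule sum.mono_neutral_right)
      show "\<forall>s\<in>{s. \<exists>v. snd s v = I_inf} - {s. \<exists>v. snd s v = I_inf} \<inter> {s. fst s \<noteq> {}}. P r s = 0"
        by (auto intro!: bad0 simp: good_def)
    qed auto
    also have "\<dots> \<le> (\<Sum>s\<in>{s. fst s \<noteq> {}}. P r s)"
      by (rule sum_mono2) (auto intro: Pn)
    also have "\<dots> = sis_surv pSIS r"
      using False by (simp add: sis_surv_def e1 fiber_sum[where Q="\<lambda>y. y \<noteq> {}"])
    finally show ?thesis .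
  qed
qed

end
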